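(* Let $T$ be a positive linear map on $\mathcal{M}_d(\mathbb{C})$ which is not completely positive. Then there exists $Y\in\mathcal{M}_d(\mathbb{C})$ such that the map $T'(\rho):=Y^\dagger T(\rho)Y$ is positive but its matrix representation $\hat T'$ (as an operator on $\mathcal{M}_d(\mathbb{C})$) satisfies $\mathrm{tr}[\hat T']<0$. In particular, the first moment of the spectrum of a positive map can be negative.
   Context: Positive: maps positive semidefinite matrices to positive semidefinite matrices; completely positive: $T\otimes\mathrm{id}_d$ is positive. $\mathrm{tr}[\hat T']$ equals the sum of the eigenvalues of $T'$ counted with algebraic multiplicity. *)

theory Defs
  imports "HOL-Analysis.Analysis" "HOL-Library.Complex_Order"
begin

text \<open>d x d complex matrices are modelled as complex^'n^'n, with d = CARD('n).
  The complex order (HOL-Library.Complex_Order) is used: z \<ge> 0 means z is real and nonnegative.\<close>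

definition psd :: "complex^'n^'n \<Rightarrow> bool" where
  "psd A \<longleftrightarrow> (\<forall>x::complex^'n. 0 \<le> (\<Sum>i\<in>UNIV. \<Sum>j\<in>UNIV. cnj (x$i) * A$i$j * x$j))"

definition cmat_scale :: "complex \<Rightarrow> complex^'n^'m \<Rightarrow> complex^'n^'m" where
  "cmat_scale c A = (\<chi> i j. c * A$i$j)"

definition cmat_linear :: "(complex^'n^'n \<Rightarrow> complex^'n^'n) \<Rightarrow> bool" where
  "cmat_linear T \<longleftrightarrow> (\<forall>A B. T (A + B) = T A + T B) \<and> (\<forall>c A. T (cmat_scale c A) = cmat_scale c (T A))"

definition positive_map :: "(complex^'n^'n \<Rightarrow> complex^'n^'n) \<Rightarrow> bool" where
  "positive_map T \<longleftrightarrow> (\<forall>A. psd A \<longrightarrow> psd (T A))"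

text \<open>T \<otimes> id_d acting on M_d \<otimes> M_d = M_{d^2}, indices ((i,k),(j,l)); T acts on the first factor.\<close>
definition tensor_id :: "(complex^'n^'n \<Rightarrow> complex^'n^'n) \<Rightarrow> complex^('n\<times>'n)^('n\<times>'n) \<Rightarrow> complex^('n\<times>'n)^('n\<times>'n)" where
  "tensor_id T X = (\<chi> p q. T (\<chi> i j. X $ (i, snd p) $ (j, snd q)) $ fst p $ fst q)"

definition completely_positive :: "(complex^'n^'n \<Rightarrow> complex^'n^'n) \<Rightarrow> bool" where
  "completely_positive T \<longleftrightarrow> (\<forall>X. psd X \<longrightarrow> psd (tensor_id T X))"

definition adj :: "complex^'n^'n \<Rightarrow> complex^'n^'n" where
  "adj Y = (\<chi> i j. cnj (Y$j$i))"

definition mat_unit :: "'n \<Rightarrow> 'n \<Rightarrow> complex^'n^'n" where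
  "mat_unit a b = (\<chi> i j. if i = a \<and> j = b then 1 else 0)"

text \<open>Trace of the matrix representation of T as a linear operator on M_d,
  computed in the standard basis E_ab.\<close>
definition map_trace :: "(complex^'n^'n \<Rightarrow> complex^'n^'n) \<Rightarrow> complex" where
  "map_trace T = (\<Sum>a\<in>UNIV. \<Sum>b\<in>UNIV. T (mat_unit a b) $ a $ b)"

end

theory Submission
  imports Defs
begin

definition qf :: "complex^'m^'m \<Rightarrow> complex^'m \<Rightarrow> complex" where
  "qf X v = (\<Sum>i\<in>UNIV. \<Sum>j\<in>UNIV. cnj (v$i) * X$i$j * v$j)"

lemma psd_qf: "psd X \<longleftrightarrow> (\<forall>v. 0 \<le> qf X v)"
  by (simp add: psd_def qf_def)

lemma qf_add_unit:
  "qf X (v + (\<chi> k. if k = s then t else 0)) =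
     qf X v + cnj t * (\<Sum>j\<in>UNIV. X$s$j * v$j) + t * (\<Sum>i\<in>UNIV. cnj (v$i) * X$i$s) + cnj t * t * X$s$s"
proof -
  have "qf X (v + (\<chi> k. if k = s then t else 0)) =
     (\<Sum>i\<in>UNIV. (\<Sum>j\<in>UNIV. cnj (v$i) * X$i$j * v$j) + cnj (v$i) * X$i$s * t
        + (if i = s then (\<Sum>j\<in>UNIV. cnj t * X$s$j * v$j) + cnj t * X$s$s * t else 0))"
  proof (unfold qf_def, intro sum.cong refl)
    fix i
    have "(\<Sum>j\<in>UNIV. cnj ((v + (\<chi> k. if k = s then t else 0))$i) * X$i$j * (v + (\<chi> k. if k = s then t else 0))$j)
      = (\<Sum>j\<in>UNIV. (cnj (v$i) * X$i$j * v$j + (if i = s then cnj t * X$s$j * v$j else 0))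
           + (if j = s then (cnj (v$i) + (if i = s then cnj t else 0)) * X$i$s * t else 0))"
      by (intro sum.cong refl) (auto simp: algebra_simps)
    also have "\<dots> = (\<Sum>j\<in>UNIV. cnj (v$i) * X$i$j * v$j) + cnj (v$i) * X$i$s * t
        + (if i = s then (\<Sum>j\<in>UNIV. cnj t * X$s$j * v$j) + cnj t * X$s$s * t else 0)"
      by (simp only: sum.distrib sum.delta) (auto simp: algebra_simps)
    finally show "(\<Sum>j\<in>UNIV. cnj ((v + (\<chi> k. if k = s then t else 0))$i) * X$i$j * (v + (\<chi> k. if k = s then t else 0))$j) = 
       (\<Sum>j\<in>UNIV. cnj (v$i) * X$i$j * v$j) + cnj (v$i) * X$i$s * t
        + (if i = s then (\<Sum>j\<in>UNIV. cnj t * X$s$j * v$j) + cnj t * X$s$s * t else 0)" .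
  qed
  also have "\<dots> = qf X v + cnj t * (\<Sum>j\<in>UNIV. X$s$j * v$j) + t * (\<Sum>i\<in>UNIV. cnj (v$i) * X$i$s) + cnj t * t * X$s$s"
    by (simp only: sum.distrib sum.delta qf_def) (auto simp: algebra_simps sum_distrib_left)
  finally show ?thesis .
qed

lemma qf_unit: "qf X (\<chi> k. if k = s then t else 0) = cnj t * t * X$s$s"
  using qf_add_unit[of X 0 s t] by (simp add: qf_def)

lemma qf_two: "qf X ((\<chi> k. if k = i then 1 else 0) + (\<chi> k. if k = s then t else 0)) =
   X$i$i + cnj t * X$s$i + t * X$i$s + cnj t * t * X$s$s"
proof -
  have a: "(\<Sum>j\<in>UNIV. X$s$j * (\<chi> k. if k = i then 1 else 0)$j) = X$s$i"
    by (simp add: if_distrib[where f="\<lambda>x. _ * x"] cong: if_cong)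
  have b: "(\<Sum>j\<in>UNIV. cnj ((\<chi> k. if k = i then 1 else 0)$j) * X$j$s) = X$i$s"
    by (simp add: if_distrib[where f="\<lambda>x. x * _"] if_distrib[where f=cnj] cong: if_cong)
  show ?thesis using qf_add_unit[of X "(\<chi> k. if k = i then 1 else 0)" s t] qf_unit[of X i 1] a b
    by simp
qed

lemma psd_diag: assumes "psd X" shows "Im (X$i$i) = 0" "Re (X$i$i) \<ge> 0"
  using assms qf_unit[of X i 1] unfolding psd_qf less_eq_complex_def
  by (metis complex_cnj_one mult_1 zero_complex.sel)+

lemma psd_herm: assumes "psd X" shows "X$j$i = cnj (X$i$j)"
proof -
  have d: "Im (X$i$i) = 0" "Im (X$j$j) = 0" using psd_diag assms by auto
  have 1: "Im (qf X ((\<chi> k. if k = i then 1 else 0) + (\<chi> k. if k = j then 1 else 0))) = 0"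
    using assms unfolding psd_qf less_eq_complex_def by (metis zero_complex.sel(2))
  have 2: "Im (qf X ((\<chi> k. if k = i then 1 else 0) + (\<chi> k. if k = j then \<i> else 0))) = 0"
    using assms unfolding psd_qf less_eq_complex_def by (metis zero_complex.sel(2))
  from 1 2 d show ?thesis unfolding qf_two by (simp add: complex_eq_iff)
qed

lemma psd_zero_row: assumes "psd X" "X$s$s = 0" shows "X$s$j = 0"
proof (rule ccontr)
  assume nz: "X$s$j \<noteq> 0"
  define z where "z = X$s$j"
  define n where "n = (Re z)^2 + (Im z)^2"
  have npos: "n > 0" using nz unfolding n_def z_def
    using complex_neq_0 by blast
  define r where "r = (Re (X$j$j) + 1) / (2 * n)"
  define t where "t = - (of_real r * z)"
  have h: "X$j$s = cnj z" using psd_herm[OF assms(1), where i=s and j=j] z_def by simp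
  have "0 \<le> qf X ((\<chi> k. if k = j then 1 else 0) + (\<chi> k. if k = s then t else 0))"
    using assms(1) psd_qf by blast
  hence "0 \<le> X$j$j + cnj t * z + t * cnj z"
    unfolding qf_two using assms(2) h z_def by simp
  hence "0 \<le> Re (X$j$j + cnj t * z + t * cnj z)"
    by (simp add: less_eq_complex_def)
  moreover have "Re (cnj t * z) = - r * n" "Re (t * cnj z) = - r * n"
    unfolding t_def n_def by (simp_all add: power2_eq_square algebra_simps)
  ultimately have "0 \<le> Re (X$j$j) - 2 * r * n" by simp
  moreover have "2 * r * n = Re (X$j$j) + 1" unfolding r_def using npos by simp
  ultimately show False by simp
qed

lemma qf_diff: "qf (X - Y) v = qf X v - qf Y v"
  unfolding qf_def by (simp add: algebra_simps sum_subtractf)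

lemma qf_scale: "qf (cmat_scale a Y) v = a * qf Y v"
  unfolding qf_def cmat_scale_def by (simp add: algebra_simps sum_distrib_left)

lemma qf_rank1: "qf (\<chi> i j. x$i * cnj (x$j)) v = (\<Sum>i\<in>UNIV. cnj (v$i) * x$i) * cnj (\<Sum>i\<in>UNIV. cnj (v$i) * x$i)"
  unfolding qf_def cnj_sum sum_product by (intro sum.cong refl) (simp add: algebra_simps)

lemma psd_rank1: "psd (\<chi> i j. x$i * cnj (x$j))"
  unfolding psd_qf qf_rank1 complex_mult_cnj by (simp add: less_eq_complex_def)

lemma psd_support_induct:
  fixes L :: "complex^'m^'m \<Rightarrow> complex"
  assumes add: "\<And>A B. L (A + B) = L A + L B"
    and scal: "\<And>c A. L (cmat_scale c A) = c * L A"
    and r1: "\<And>x. 0 \<le> L (\<chi> i j. x$i * cnj (x$j))"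
    and fin: "finite S"
  shows "\<forall>X. psd X \<and> (\<forall>i j. i \<notin> S \<or> j \<notin> S \<longrightarrow> X$i$j = 0) \<longrightarrow> 0 \<le> L X"
  using fin
proof (induction S rule: finite_induct)
  case empty
  have L0: "L 0 = 0" using add[of 0 0] by simp
  show ?case
  proof (intro allI impI)
    fix X :: "complex^'m^'m" assume "psd X \<and> (\<forall>i j. i \<notin> {} \<or> j \<notin> {} \<longrightarrow> X$i$j = 0)"
    hence "X = 0" by (simp add: vec_eq_iff)
    thus "0 \<le> L X" using L0 by simp
  qed
next
  case (insert s S)
  show ?case
  proof (intro allI impI)
    fix X :: "complex^'m^'m"
    assume H: "psd X \<and> (\<forall>i j. i \<notin> insert s S \<or> j \<notin> insert s S \<longrightarrow> X$i$j = 0)"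
    hence P: "psd X" and sup: "\<And>i j. i \<notin> insert s S \<or> j \<notin> insert s S \<Longrightarrow> X$i$j = 0" by auto
    have herm: "\<And>i j. X$j$i = cnj (X$i$j)" using psd_herm[OF P] by blast
    show "0 \<le> L X"
    proof (cases "X$s$s = 0")
      case True
      have r0: "\<And>j. X$s$j = 0" using psd_zero_row[OF P True] .
      have c0: "\<And>j. X$j$s = 0" using herm r0 by (metis complex_cnj_zero)
      have "\<forall>i j. i \<notin> S \<or> j \<notin> S \<longrightarrow> X$i$j = 0"
      proof (intro allI impI)
        fix i j assume "i \<notin> S \<or> j \<notin> S"
        then show "X$i$j = 0" using sup r0 c0 by (cases "i = s"; cases "j = s") auto
      qed
      thus ?thesis using insert.IH P by blast
    next
      case False
      define c where "c = X$s$s"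
      have cnz: "c \<noteq> 0" using False c_def by simp
      have cre: "c = of_real (Re c)" using psd_diag(1)[OF P, of s] c_def by (simp add: complex_eq_iff)
      have cpos: "Re c > 0" using psd_diag(2)[OF P, of s] cnz c_def cre
        by (metis less_eq_real_def of_real_0)
      have ccnj: "cnj c = c" using cre by (metis complex_cnj_complex_of_real)
      define col where "col = (\<chi> i. X$i$s)"
      define R where "R = (\<chi> i j. col$i * cnj (col$j))"
      define X' where "X' = X - cmat_scale (1/c) R"
      have decomp: "X = X' + cmat_scale (1/c) R" unfolding X'_def by simp
      have LX: "L X = L X' + (1/c) * L R" using decomp add scal by metis
      have sup': "\<forall>i j. i \<notin> S \<or> j \<notin> S \<longrightarrow> X'$i$j = 0"
      proof (intro allI impI)
        fix i j assume ij: "i \<notin> S \<or> j \<notin> S"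
        show "X'$i$j = 0"
        proof (cases "i \<notin> insert s S \<or> j \<notin> insert s S")
          case True
          hence "X$i$j = 0" using sup by blast
          moreover have "col$i = 0 \<or> col$j = 0" using True sup unfolding col_def by auto
          ultimately show ?thesis unfolding X'_def R_def cmat_scale_def by auto
        next
          case False
          hence "i = s \<or> j = s" using ij by auto
          thus ?thesis
          proof
            assume is_: "i = s"
            have "X$s$s * cnj (X$j$s) = c * X$s$j" using herm[of s j] c_def by simp
            then show ?thesis unfolding X'_def R_def cmat_scale_def col_def using is_ cnz
              by (simp add: c_def[symmetric])
          next
            assume js: "j = s"
            have "X$i$s * cnj (X$s$s) = c * X$i$s" using ccnj c_def by simp
            then show ?thesis unfolding X'_def R_def cmat_scale_def col_def using js cnz ccnj
              by (simp add: c_def[symmetric])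
          qed
        qed
      qed
      have psd': "psd X'"
        unfolding psd_qf
      proof
        fix v
        define \<beta> where "\<beta> = (\<Sum>i\<in>UNIV. cnj (v$i) * X$i$s)"
        define t where "t = - cnj \<beta> / c"
        have q1: "qf X' v = qf X v - (1/c) * (\<beta> * cnj \<beta>)"
          unfolding X'_def qf_diff qf_scale R_def qf_rank1 \<beta>_def col_def by simp
        have s1: "(\<Sum>j\<in>UNIV. X$s$j * v$j) = cnj \<beta>"
          unfolding \<beta>_def cnj_sum
        proof (intro sum.cong refl)
          fix j show "X$s$j * v$j = cnj (cnj (v$j) * X$j$s)" using herm[of j s] by simp
        qed
        have q2: "qf X (v + (\<chi> k. if k = s then t else 0)) = qf X v - (1/c) * (\<beta> * cnj \<beta>)"
        proof -
          have "qf X (v + (\<chi> k. if k = s then t else 0)) = qf X v + cnj t * cnj \<beta> + t * \<beta> + cnj t * t * c"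
            unfolding qf_add_unit s1 \<beta>_def[symmetric] c_def ..
          also have "\<dots> = qf X v - (1/c) * (\<beta> * cnj \<beta>)"
            unfolding t_def using cnz ccnj by (simp add: field_simps power2_eq_square)
          finally show ?thesis .
        qed
        show "0 \<le> qf X' v" using q1 q2 P psd_qf by metis
      qed
      have "0 \<le> L X'" using insert.IH psd' sup' by blast
      moreover have "0 \<le> (1/c) * L R"
      proof -
        have "0 \<le> L R" unfolding R_def by (rule r1)
        moreover have "1/c = of_real (1 / Re c)" using cre by (metis of_real_divide of_real_1)
        ultimately have "Re ((1/c) * L R) = (1 / Re c) * Re (L R)" "Im ((1/c) * L R) = (1 / Re c) * Im (L R)"
          by (simp_all only:) (simp_all del: of_real_divide)
        thus ?thesis using cpos \<open>0 \<le> L R\<close> by (simp add: less_eq_complex_def)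
      qed
      ultimately show ?thesis using LX by simp
    qed
  qed
qed

lemma psd_nonneg_functional:
  fixes L :: "complex^'m^'m \<Rightarrow> complex"
  assumes add: "\<And>A B. L (A + B) = L A + L B"
    and scal: "\<And>c A. L (cmat_scale c A) = c * L A"
    and r1: "\<And>x. 0 \<le> L (\<chi> i j. x$i * cnj (x$j))"
    and "psd X"
  shows "0 \<le> L X"
  using psd_support_induct[OF add scal r1, of UNIV] assms(4) by simp


lemma qf_alt: "qf X v = (\<Sum>i\<in>UNIV. cnj (v$i) * (X *v v)$i)"
  unfolding qf_def matrix_vector_mult_def by (simp add: sum_distrib_left mult.assoc)

lemma adj_pair: "(\<Sum>i\<in>UNIV. cnj (v$i) * (adj Y *v u)$i) = (\<Sum>k\<in>UNIV. cnj ((Y *v v)$k) * u$k)"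
proof -
  have "(\<Sum>i\<in>UNIV. cnj (v$i) * (adj Y *v u)$i) = (\<Sum>i\<in>UNIV. \<Sum>k\<in>UNIV. cnj (v$i) * cnj (Y$k$i) * u$k)"
    unfolding matrix_vector_mult_def adj_def by (simp add: sum_distrib_left mult.assoc)
  also have "\<dots> = (\<Sum>k\<in>UNIV. \<Sum>i\<in>UNIV. cnj (v$i) * cnj (Y$k$i) * u$k)" by (rule sum.swap)
  also have "\<dots> = (\<Sum>k\<in>UNIV. cnj ((Y *v v)$k) * u$k)"
    unfolding matrix_vector_mult_def by (simp add: cnj_sum sum_distrib_right sum_distrib_left mult.commute mult.left_commute)
  finally show ?thesis .
qed

lemma qf_congr: "qf (adj Y ** B ** Y) v = qf B (Y *v v)"
  unfolding qf_alt by (simp add: matrix_vector_mul_assoc[symmetric] adj_pair)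

lemma psd_congr: "psd B \<Longrightarrow> psd (adj Y ** B ** Y)"
  unfolding psd_qf qf_congr by blast

lemma positive_congr: "positive_map T \<Longrightarrow> positive_map (\<lambda>\<rho>. adj Y ** T \<rho> ** Y)"
  unfolding positive_map_def using psd_congr by blast

lemma lin_add: "cmat_linear T \<Longrightarrow> T (A + B) = T A + T B"
  unfolding cmat_linear_def by blast

lemma lin_scale: "cmat_linear T \<Longrightarrow> T (cmat_scale c A) = cmat_scale c (T A)"
  unfolding cmat_linear_def by blast

lemma lin_zero: "cmat_linear T \<Longrightarrow> T 0 = 0"
  using lin_add[of T 0 0] by simp

lemma lin_sum: assumes "cmat_linear T" shows "T (sum f S) = (\<Sum>x\<in>S. T (f x))"
proof (cases "finite S")
  case True then show ?thesis
    by (induction S rule: finite_induct) (simp_all add: lin_zero[OF assms] lin_add[OF assms])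
next
  case False then show ?thesis using lin_zero[OF assms] by simp
qed

lemma mat_expand: "M = (\<Sum>a\<in>UNIV. \<Sum>b\<in>UNIV. cmat_scale (M$a$b) (mat_unit a b))"
proof -
  have e: "\<And>i j x y. M$x$y * (if i = x \<and> j = y then 1 else 0) = (if x = i then (if y = j then M$x$y else 0) else 0)"
    by auto
  have f: "\<And>P (f::'a \<Rightarrow> complex) A. (\<Sum>y\<in>A. if P then f y else 0) = (if P then (\<Sum>y\<in>A. f y) else 0)"
    by simp
  show ?thesis by (simp add: vec_eq_iff sum_component cmat_scale_def mat_unit_def e f cong: if_cong)
qed

lemma lin_expand: assumes "cmat_linear T"
  shows "T M = (\<Sum>a\<in>UNIV. \<Sum>b\<in>UNIV. cmat_scale (M$a$b) (T (mat_unit a b)))"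
  by (subst mat_expand) (simp add: lin_sum[OF assms] lin_scale[OF assms])

lemma lin_expand_entry: assumes "cmat_linear T"
  shows "T M $k$l = (\<Sum>a\<in>UNIV. \<Sum>b\<in>UNIV. M$a$b * T (mat_unit a b) $k$l)"
  by (subst lin_expand[OF assms]) (simp add: sum_component cmat_scale_def)

lemma rank1_unit: "mat_unit a a = (\<chi> i j. (\<chi> k. if k = a then 1 else 0)$i * cnj ((\<chi> k. if k = a then (1::complex) else 0)$j))"
  by (auto simp: vec_eq_iff mat_unit_def)

lemma rank1_P: "(\<chi> i j. ((\<chi> k. if k = a then 1 else 0) + (\<chi> k. if k = b then 1 else 0))$i *
     cnj (((\<chi> k. if k = a then 1 else 0) + (\<chi> k. if k = b then (1::complex) else 0))$j))
   = mat_unit a a + mat_unit a b + mat_unit b a + mat_unit b b"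
  by (auto simp: vec_eq_iff mat_unit_def)

lemma rank1_Q: "(\<chi> i j. ((\<chi> k. if k = a then 1 else 0) + (\<chi> k. if k = b then \<i> else 0))$i *
     cnj (((\<chi> k. if k = a then 1 else 0) + (\<chi> k. if k = b then \<i> else 0))$j))
   = mat_unit a a + cmat_scale (-\<i>) (mat_unit a b) + cmat_scale \<i> (mat_unit b a) + mat_unit b b"
  by (auto simp: vec_eq_iff mat_unit_def cmat_scale_def complex_eq_iff)

lemma aux_lin: "x + y = p + q \<Longrightarrow> y - x = p - (q::complex) \<Longrightarrow> y = p"
proof -
  assume a: "x + y = p + q" and b: "y - x = p - q"
  have "(x + y) + (y - x) = (p + q) + (p - q)" using a b by simp
  hence "2 * y = 2 * p" by (simp add: algebra_simps)
  thus "y = p" by simp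
qed

lemma T_herm_units:
  assumes lin: "cmat_linear T" and pos: "positive_map T"
  shows "T (mat_unit b a) $l$k = cnj (T (mat_unit a b) $k$l)"
proof -
  have psdT: "\<And>M. psd M \<Longrightarrow> \<forall>i j. T M $j$i = cnj (T M $i$j)"
    using pos psd_herm unfolding positive_map_def by blast
  define A where "A = T (mat_unit a b)"
  define B where "B = T (mat_unit b a)"
  define C where "C = T (mat_unit a a)"
  define D where "D = T (mat_unit b b)"
  have hC: "\<forall>i j. C$j$i = cnj (C$i$j)" unfolding C_def using psdT[OF psd_rank1] rank1_unit by metis
  have hD: "\<forall>i j. D$j$i = cnj (D$i$j)" unfolding D_def using psdT[OF psd_rank1] rank1_unit by metis
  have TP: "T (mat_unit a a + mat_unit a b + mat_unit b a + mat_unit b b) = C + A + B + D"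
    unfolding A_def B_def C_def D_def by (simp add: lin_add[OF lin])
  have TQ: "T (mat_unit a a + cmat_scale (-\<i>) (mat_unit a b) + cmat_scale \<i> (mat_unit b a) + mat_unit b b)
     = C + cmat_scale (-\<i>) A + cmat_scale \<i> B + D"
    unfolding A_def B_def C_def D_def by (simp add: lin_add[OF lin] lin_scale[OF lin])
  have hP: "\<forall>i j. (C + A + B + D)$j$i = cnj ((C + A + B + D)$i$j)"
    using psdT[OF psd_rank1] rank1_P TP by metis
  have hQ: "\<forall>i j. (C + cmat_scale (-\<i>) A + cmat_scale \<i> B + D)$j$i = cnj ((C + cmat_scale (-\<i>) A + cmat_scale \<i> B + D)$i$j)"
    using psdT[OF psd_rank1] rank1_Q TQ by metis
  have 1: "C$l$k + A$l$k + B$l$k + D$l$k = cnj (C$k$l) + cnj (A$k$l) + cnj (B$k$l) + cnj (D$k$l)"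
    using hP[rule_format, of l k] by simp
  have 2: "C$l$k - \<i> * A$l$k + \<i> * B$l$k + D$l$k = cnj (C$k$l) + \<i> * cnj (A$k$l) - \<i> * cnj (B$k$l) + cnj (D$k$l)"
    using hQ[rule_format, of l k] by (simp add: cmat_scale_def)
  have 3: "C$l$k = cnj (C$k$l)" "D$l$k = cnj (D$k$l)" using hC[rule_format, of l k] hD[rule_format, of l k] by auto
  from 1 3 have 4: "A$l$k + B$l$k = cnj (A$k$l) + cnj (B$k$l)" by simp
  from 2 3 have "\<i> * (B$l$k - A$l$k) = \<i> * (cnj (A$k$l) - cnj (B$k$l))" by (simp add: algebra_simps)
  hence 5: "B$l$k - A$l$k = cnj (A$k$l) - cnj (B$k$l)" by simp
  from 4 5 have "B$l$k = cnj (A$k$l)" using aux_lin by blast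
  thus ?thesis unfolding A_def B_def .
qed

lemma congr_entry: "(adj Y ** B ** Y)$a$b = (\<Sum>k\<in>UNIV. \<Sum>l\<in>UNIV. cnj (Y$k$a) * B$k$l * Y$l$b)"
proof -
  have "(adj Y ** B ** Y)$a$b = (\<Sum>l\<in>UNIV. \<Sum>k\<in>UNIV. cnj (Y$k$a) * B$k$l * Y$l$b)"
    unfolding matrix_matrix_mult_def adj_def by (simp add: sum_distrib_right)
  also have "\<dots> = (\<Sum>k\<in>UNIV. \<Sum>l\<in>UNIV. cnj (Y$k$a) * B$k$l * Y$l$b)" by (rule sum.swap)
  finally show ?thesis .
qed

lemma map_trace_congr: "map_trace (\<lambda>\<rho>. adj Y ** T \<rho> ** Y) =
  (\<Sum>a\<in>UNIV. \<Sum>b\<in>UNIV. \<Sum>k\<in>UNIV. \<Sum>l\<in>UNIV. cnj (Y$k$a) * T (mat_unit a b)$k$l * Y$l$b)"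
  unfolding map_trace_def congr_entry ..

lemma map_trace_real:
  assumes lin: "cmat_linear T" and pos: "positive_map T"
  shows "Im (map_trace (\<lambda>\<rho>. adj Y ** T \<rho> ** Y)) = 0"
proof -
  define g where "g a b k l = cnj (Y$k$a) * T (mat_unit a b)$k$l * Y$l$b" for a b k l
  have gc: "cnj (g a b k l) = g b a l k" for a b k l
    unfolding g_def using T_herm_units[OF lin pos, where a=a and b=b and k=k and l=l] by simp
  have "cnj (\<Sum>a\<in>UNIV. \<Sum>b\<in>UNIV. \<Sum>k\<in>UNIV. \<Sum>l\<in>UNIV. g a b k l)
     = (\<Sum>a\<in>UNIV. \<Sum>b\<in>UNIV. \<Sum>k\<in>UNIV. \<Sum>l\<in>UNIV. g b a l k)"
    by (simp add: cnj_sum gc)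
  also have "\<dots> = (\<Sum>b\<in>UNIV. \<Sum>a\<in>UNIV. \<Sum>k\<in>UNIV. \<Sum>l\<in>UNIV. g b a l k)" by (rule sum.swap)
  also have "\<dots> = (\<Sum>b\<in>UNIV. \<Sum>a\<in>UNIV. \<Sum>l\<in>UNIV. \<Sum>k\<in>UNIV. g b a l k)"
    by (intro sum.cong refl sum.swap)
  finally have "cnj (\<Sum>a\<in>UNIV. \<Sum>b\<in>UNIV. \<Sum>k\<in>UNIV. \<Sum>l\<in>UNIV. g a b k l)
     = (\<Sum>a\<in>UNIV. \<Sum>b\<in>UNIV. \<Sum>k\<in>UNIV. \<Sum>l\<in>UNIV. g a b k l)" .
  hence "Im (\<Sum>a\<in>UNIV. \<Sum>b\<in>UNIV. \<Sum>k\<in>UNIV. \<Sum>l\<in>UNIV. g a b k l) = 0"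
    by (metis Reals_cnj_iff complex_is_Real_iff)
  thus ?thesis unfolding map_trace_congr g_def .
qed

lemma sum_pair: "(\<Sum>p\<in>(UNIV::('a\<times>'b) set). f p) = (\<Sum>k\<in>UNIV. \<Sum>m\<in>UNIV. f (k,m))"
  by (simp add: sum.cartesian_product UNIV_Times_UNIV[symmetric] del: UNIV_Times_UNIV)

lemma swap_out: "(\<Sum>i\<in>A. \<Sum>a\<in>B. \<Sum>b\<in>C. f i a b) = (\<Sum>a\<in>B. \<Sum>b\<in>C. \<Sum>i\<in>A. (f i a b::complex))"
proof -
  have "(\<Sum>i\<in>A. \<Sum>a\<in>B. \<Sum>b\<in>C. f i a b) = (\<Sum>a\<in>B. \<Sum>i\<in>A. \<Sum>b\<in>C. f i a b)" by (rule sum.swap)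
  also have "\<dots> = (\<Sum>a\<in>B. \<Sum>b\<in>C. \<Sum>i\<in>A. f i a b)" by (intro sum.cong refl sum.swap)
  finally show ?thesis .
qed

lemma qf_add: "qf (A + B) v = qf A v + qf B v"
  unfolding qf_def by (simp add: algebra_simps sum.distrib)

lemma tensor_add: assumes lin: "cmat_linear T"
  shows "tensor_id T (A + B) = tensor_id T A + tensor_id T B"
proof -
  have e: "\<And>p q. (\<chi> i j. (A + B) $ (i, snd p) $ (j, snd q)) = (\<chi> i j. A $ (i, snd p) $ (j, snd q)) + (\<chi> i j. B $ (i, snd p) $ (j, snd q))"
    by (simp add: vec_eq_iff)
  show ?thesis unfolding tensor_id_def e lin_add[OF lin] by (simp add: vec_eq_iff)
qed

lemma tensor_scale: assumes lin: "cmat_linear T"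
  shows "tensor_id T (cmat_scale c A) = cmat_scale c (tensor_id T A)"
proof -
  have e: "\<And>p q. (\<chi> i j. (cmat_scale c A) $ (i, snd p) $ (j, snd q)) = cmat_scale c (\<chi> i j. A $ (i, snd p) $ (j, snd q))"
    by (simp add: vec_eq_iff cmat_scale_def)
  show ?thesis unfolding tensor_id_def by (simp add: e lin_scale[OF lin]) (simp add: cmat_scale_def)
qed

lemma key_identity:
  assumes lin: "cmat_linear T"
    and Ydef: "Y = (\<chi> k a. \<Sum>l\<in>UNIV. w$(k,l) * cnj (x$(a,l)))"
  shows "qf (tensor_id T (\<chi> i j. x$i * cnj (x$j))) w = map_trace (\<lambda>\<rho>. adj Y ** T \<rho> ** Y)"
proof -
  define G where "G a b k l = T (mat_unit a b)$k$l" for a b k l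
  define H where "H a b p q = cnj (w$p) * x$(a,snd p) * cnj (x$(b,snd q)) * G a b (fst p) (fst q) * w$q" for a b p q
  have ent: "tensor_id T (\<chi> i j. x$i * cnj (x$j)) $p$q =
     (\<Sum>a\<in>UNIV. \<Sum>b\<in>UNIV. x$(a,snd p) * cnj (x$(b,snd q)) * G a b (fst p) (fst q))" for p q
    unfolding tensor_id_def vec_lambda_beta
    by (subst lin_expand_entry[OF lin]) (simp add: G_def)
  have "qf (tensor_id T (\<chi> i j. x$i * cnj (x$j))) w = (\<Sum>p\<in>UNIV. \<Sum>q\<in>UNIV. \<Sum>a\<in>UNIV. \<Sum>b\<in>UNIV. H a b p q)"
    unfolding qf_def ent
  proof (intro sum.cong refl)
    fix p q
    show "cnj (w$p) * (\<Sum>a\<in>UNIV. \<Sum>b\<in>UNIV. x$(a,snd p) * cnj (x$(b,snd q)) * G a b (fst p) (fst q)) * w$q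
      = (\<Sum>a\<in>UNIV. \<Sum>b\<in>UNIV. H a b p q)"
      unfolding H_def sum_distrib_left sum_distrib_right by (simp add: mult.assoc)
  qed
  also have "\<dots> = (\<Sum>p\<in>UNIV. \<Sum>a\<in>UNIV. \<Sum>b\<in>UNIV. \<Sum>q\<in>UNIV. H a b p q)"
    by (intro sum.cong refl swap_out)
  also have "\<dots> = (\<Sum>a\<in>UNIV. \<Sum>b\<in>UNIV. \<Sum>p\<in>UNIV. \<Sum>q\<in>UNIV. H a b p q)"
    by (rule swap_out)
  also have "\<dots> = (\<Sum>a\<in>UNIV. \<Sum>b\<in>UNIV. \<Sum>k\<in>UNIV. \<Sum>l\<in>UNIV. cnj (Y$k$a) * G a b k l * Y$l$b)"
  proof (intro sum.cong refl)
    fix a b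
    have "(\<Sum>p\<in>UNIV. \<Sum>q\<in>UNIV. H a b p q) = (\<Sum>k\<in>UNIV. \<Sum>m\<in>UNIV. \<Sum>l\<in>UNIV. \<Sum>n\<in>UNIV. H a b (k,m) (l,n))"
      by (simp add: sum_pair)
    also have "\<dots> = (\<Sum>k\<in>UNIV. \<Sum>l\<in>UNIV. \<Sum>m\<in>UNIV. \<Sum>n\<in>UNIV. H a b (k,m) (l,n))"
      by (intro sum.cong refl sum.swap)
    also have "\<dots> = (\<Sum>k\<in>UNIV. \<Sum>l\<in>UNIV. cnj (Y$k$a) * G a b k l * Y$l$b)"
    proof (intro sum.cong refl)
      fix k l
      show "(\<Sum>m\<in>UNIV. \<Sum>n\<in>UNIV. H a b (k,m) (l,n)) = cnj (Y$k$a) * G a b k l * Y$l$b"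
      proof -
        have "cnj (Y$k$a) * G a b k l * Y$l$b =
           (\<Sum>m\<in>UNIV. cnj (w$(k,m)) * x$(a,m)) * G a b k l * (\<Sum>n\<in>UNIV. w$(l,n) * cnj (x$(b,n)))"
          unfolding Ydef by (simp add: cnj_sum)
        also have "\<dots> = (\<Sum>m\<in>UNIV. \<Sum>n\<in>UNIV. (cnj (w$(k,m)) * x$(a,m)) * G a b k l * (w$(l,n) * cnj (x$(b,n))))"
          unfolding sum_distrib_left sum_distrib_right by (rule sum.swap)
        also have "\<dots> = (\<Sum>m\<in>UNIV. \<Sum>n\<in>UNIV. H a b (k,m) (l,n))"
          unfolding H_def by (intro sum.cong refl) (simp add: algebra_simps)
        finally show ?thesis ..
      qed
    qed
    finally show "(\<Sum>p\<in>UNIV. \<Sum>q\<in>UNIV. H a b p q) = (\<Sum>k\<in>UNIV. \<Sum>l\<in>UNIV. cnj (Y$k$a) * G a b k l * Y$l$b)" .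
  qed
  also have "\<dots> = map_trace (\<lambda>\<rho>. adj Y ** T \<rho> ** Y)"
    unfolding map_trace_congr G_def ..
  finally show ?thesis .
qed


theorem mainTheorem8:
  fixes T :: "complex^'n^'n \<Rightarrow> complex^'n^'n"
  assumes "cmat_linear T" and "positive_map T" and "\<not> completely_positive T"
  shows "\<exists>Y::complex^'n^'n.
           positive_map (\<lambda>\<rho>. adj Y ** T \<rho> ** Y) \<and> map_trace (\<lambda>\<rho>. adj Y ** T \<rho> ** Y) < 0"
proof (rule ccontr)
  assume nex: "\<not> (\<exists>Y::complex^'n^'n.
           positive_map (\<lambda>\<rho>. adj Y ** T \<rho> ** Y) \<and> map_trace (\<lambda>\<rho>. adj Y ** T \<rho> ** Y) < 0)"
  have nonneg: "0 \<le> map_trace (\<lambda>\<rho>. adj Y ** T \<rho> ** Y)" for Y :: "complex^'n^'n"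
  proof -
    have "\<not> map_trace (\<lambda>\<rho>. adj Y ** T \<rho> ** Y) < 0" using nex positive_congr[OF assms(2)] by blast
    moreover have "Im (map_trace (\<lambda>\<rho>. adj Y ** T \<rho> ** Y)) = 0" using map_trace_real[OF assms(1,2)] .
    ultimately show ?thesis by (auto simp: less_complex_def less_eq_complex_def)
  qed
  have "completely_positive T"
    unfolding completely_positive_def
  proof (intro allI impI)
    fix X :: "complex^('n\<times>'n)^('n\<times>'n)" assume PX: "psd X"
    show "psd (tensor_id T X)"
      unfolding psd_qf
    proof
      fix w :: "complex^('n\<times>'n)"
      show "0 \<le> qf (tensor_id T X) w"
      proof (rule psd_nonneg_functional[where L="\<lambda>X. qf (tensor_id T X) w"])
        show "\<And>A B. qf (tensor_id T (A + B)) w = qf (tensor_id T A) w + qf (tensor_id T B) w"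
          by (simp add: tensor_add[OF assms(1)] qf_add)
        show "\<And>c A. qf (tensor_id T (cmat_scale c A)) w = c * qf (tensor_id T A) w"
          by (simp add: tensor_scale[OF assms(1)] qf_scale)
        show "\<And>x. 0 \<le> qf (tensor_id T (\<chi> i j. x$i * cnj (x$j))) w"
          unfolding key_identity[OF assms(1) refl] by (rule nonneg)
        show "psd X" by (rule PX)
      qed
    qed
  qed
  with assms(3) show False by simp
qed

end
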